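(* Assume the setting of the previous statement: $(U,V_1)\sim p(u,v_1)$, a measurable real function $f(u,v)$, $c(u)=\mathbf{E}_{v\sim p(v)}[e^{f(u,v)}]<\infty$, Borel sets $B_u\subset(c(u),\infty)$ with $S_{B_u}=\{v: e^{f(u,v)}\in B_u\}$ and $p(S_{B_u})>0$, and $q(\cdot\mid u)$ the law of $V_{2:k}=(V_2,\dots,V_k)$ drawn i.i.d. from $p(v)$ conditioned on $S_{B_u}$. For fixed $(u,v_1)$ define $$Z(v_{2:k})=\log\frac{e^{f(u,v_1)}}{\frac1k\sum_{j=1}^k e^{f(u,v_j)}}.$$ Let $p(v_{2:k})$ denote the law of $V_{2:k}$ drawn i.i.d. from $p(v)$, and let $\tilde q(\cdot\mid u)$ denote $p(v_{2:k})$ conditioned on the complement of the event on which $q$ conditions (i.e. $\tilde q(A)=p(A\mid S_{B_u}^c)$ in the paper's notation), assumed to have positive probability. For a distribution $r$ of the negatives, define $\mathrm{Bias}_r(Z)=\mathcal{I}(U;V_1)-\mathbf{E}_{(u,v_1)\sim p(u,v_1)}\mathbf{E}_{v_{2:k}\sim r}[Z]$ and $\mathrm{Var}_r(Z)=\mathrm{Var}_{v_{2:k}\sim r}[Z]$. Suppose $S_{B_u}$ is chosen so that $\mathrm{Var}_{q(v_{2:k})}[Z]\le\mathrm{Var}_{\tilde q(v_{2:k})}[Z]$. Then $$\mathrm{Bias}_p(Z)\le\mathrm{Bias}_q(Z)\quad\text{and}\quad \mathrm{Var}_p(Z)\ge\mathrm{Var}_q(Z),$$ that is, sampling the negatives $v_{2:k}\sim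 q$ instead of $p$ trades higher bias for lower variance.
   Context: $\mathbf{E}_{p(v_{2:k})}[Z]$ (averaged over $(u,v_1)$) is the NCE estimator and $\mathbf{E}_{q(v_{2:k})}[Z]$ the conditional NCE (CNCE) estimator of the mutual information $\mathcal{I}(U;V_1)$; both are lower bounds on $\mathcal{I}(U;V_1)$ with the CNCE value at most the NCE value. *)

theory Defs
  imports "HOL-Probability.Probability"
begin

definition MI :: "('u \<times> 'v) measure \<Rightarrow> 'u measure \<Rightarrow> 'v measure \<Rightarrow> real" where
  "MI P MU MV = prob_space.mutual_information P (exp 1) MU MV fst snd"

definition Zfun :: "('u \<Rightarrow> 'v \<Rightarrow> real) \<Rightarrow> nat \<Rightarrow> 'u \<Rightarrow> 'v \<Rightarrow> (nat \<Rightarrow> 'v) \<Rightarrow> real" where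
  "Zfun f k u v1 w =
     ln (exp (f u v1) / ((1 / real k) * (exp (f u v1) + (\<Sum>j\<in>{2..k}. exp (f u (w j))))))"

definition Ex :: "'a measure \<Rightarrow> ('a \<Rightarrow> real) \<Rightarrow> real" where
  "Ex r X = (\<integral>x. X x \<partial>r)"

definition Var :: "'a measure \<Rightarrow> ('a \<Rightarrow> real) \<Rightarrow> real" where
  "Var r X = (\<integral>x. (X x - Ex r X)\<^sup>2 \<partial>r)"

definition Bias :: "('u \<times> 'v) measure \<Rightarrow> 'u measure \<Rightarrow> 'v measure \<Rightarrow> ('u \<Rightarrow> (nat \<Rightarrow> 'v) measure)
    \<Rightarrow> ('u \<Rightarrow> 'v \<Rightarrow> real) \<Rightarrow> nat \<Rightarrow> real" where
  "Bias P MU MV r f k = MI P MU MV - (\<integral>uv. Ex (r (fst uv)) (Zfun f k (fst uv) (snd uv)) \<partial>P)"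

end

theory Submission
  imports Defs
begin


lemma unif_density:
  fixes M :: "'a measure"
  assumes fin: "finite_measure M" and A: "A \<in> sets M" and pos: "measure M A > 0"
  shows "uniform_measure M A = density M (\<lambda>x. ennreal (indicator A x / measure M A))"
proof -
  have e: "emeasure M A = ennreal (measure M A)"
    using fin by (simp add: finite_measure.emeasure_eq_measure)
  show ?thesis unfolding uniform_measure_def e
    apply (rule arg_cong[where f="density M"])
    apply (rule ext)
    using divide_ennreal[of 1 "measure M A"] pos by (auto split: split_indicator)
qed

lemma unif_integral:
  fixes M :: "'a measure" and g :: "'a \<Rightarrow> real"
  assumes fin: "finite_measure M" and A: "A \<in> sets M" and pos: "measure M A > 0"
    and g: "integrable M g"
  shows "integrable (uniform_measure M A) g"
    "integral\<^sup>L (uniform_measure M A) g = (\<integral>x. g x * indicator A x \<partial>M) / measure M A"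
proof -
  have gm: "g \<in> borel_measurable M" using g by auto
  have im: "(\<lambda>x. indicator A x / measure M A) \<in> borel_measurable M" using A by measurable
  show "integrable (uniform_measure M A) g"
    unfolding unif_density[OF fin A pos]
    apply (subst integrable_density[OF gm im])
     apply (auto simp: pos)
    using integrable_real_mult_indicator[OF A g] integrable_divide[of M "\<lambda>x. g x * indicator A x" "measure M A"]
    by (simp add: mult.commute)
  show "integral\<^sup>L (uniform_measure M A) g = (\<integral>x. g x * indicator A x \<partial>M) / measure M A"
    unfolding unif_density[OF fin A pos]
    apply (subst integral_density[OF gm im])
     apply (auto simp: pos)
    by (simp add: mult.commute)
qed



lemma var_shift:
  fixes r :: "'a measure" and Z :: "'a \<Rightarrow> real"
  assumes r: "prob_space r" and i1: "integrable r Z" and i2: "integrable r (\<lambda>x. (Z x)\<^sup>2)"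
  shows "(\<integral>x. (Z x - m)\<^sup>2 \<partial>r) = Var r Z + (Ex r Z - m)\<^sup>2"
proof -
  have eq: "\<And>m. (\<lambda>x. (Z x - m)\<^sup>2) = (\<lambda>x. (Z x)\<^sup>2 - 2 * m * Z x + m\<^sup>2)"
    by (auto simp: power2_eq_square algebra_simps)
  have gen: "\<And>m. (\<integral>x. (Z x - m)\<^sup>2 \<partial>r) = (\<integral>x. (Z x)\<^sup>2 \<partial>r) - 2 * m * Ex r Z + m\<^sup>2"
  proof -
    fix m
    have a: "integrable r (\<lambda>x. 2 * m * Z x)" using i1 by auto
    have b: "integrable r (\<lambda>x. m\<^sup>2 :: real)" using prob_space.finite_measure[OF r]
      by (simp add: finite_measure.integrable_const)
    have "(\<integral>x. (Z x)\<^sup>2 - 2 * m * Z x + m\<^sup>2 \<partial>r) = (\<integral>x. (Z x)\<^sup>2 - 2 * m * Z x \<partial>r) + (\<integral>x. m\<^sup>2 \<partial>r)"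
      using i2 a b by (intro Bochner_Integration.integral_add) auto
    also have "(\<integral>x. (Z x)\<^sup>2 - 2 * m * Z x \<partial>r) = (\<integral>x. (Z x)\<^sup>2 \<partial>r) - (\<integral>x. 2 * m * Z x \<partial>r)"
      using i2 a by (intro Bochner_Integration.integral_diff) auto
    also have "(\<integral>x. 2 * m * Z x \<partial>r) = 2 * m * Ex r Z" unfolding Ex_def by simp
    also have "(\<integral>x. m\<^sup>2 \<partial>r) = m\<^sup>2" using prob_space.prob_space[OF r] by simp
    finally show "(\<integral>x. (Z x - m)\<^sup>2 \<partial>r) = (\<integral>x. (Z x)\<^sup>2 \<partial>r) - 2 * m * Ex r Z + m\<^sup>2" unfolding eq .
  qed
  show ?thesis unfolding Var_def gen by (simp add: power2_eq_square algebra_simps)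
qed

lemma var_mix:
  fixes M :: "'a measure" and Z :: "'a \<Rightarrow> real"
  assumes M: "prob_space M" and A: "A \<in> sets M"
    and pos: "measure M A > 0" and pos2: "measure M (space M - A) > 0"
    and i1: "integrable M Z" and i2: "integrable M (\<lambda>x. (Z x)\<^sup>2)"
  shows "Var M Z \<ge> measure M A * Var (uniform_measure M A) Z
          + measure M (space M - A) * Var (uniform_measure M (space M - A)) Z"
proof -
  interpret prob_space M by fact
  have fin: "finite_measure M" by (simp add: finite_measure_axioms)
  have Ac: "space M - A \<in> sets M" using A by auto
  define m where "m = Ex M Z"
  have sq: "integrable M (\<lambda>x. (Z x - m)\<^sup>2)"
  proof -
    have eq: "(\<lambda>x. (Z x - m)\<^sup>2) = (\<lambda>x. (Z x)\<^sup>2 - 2 * m * Z x + m\<^sup>2)"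
      by (auto simp: power2_eq_square algebra_simps)
    show ?thesis unfolding eq using i1 i2 by auto
  qed
  have ps: "prob_space (uniform_measure M A)" "prob_space (uniform_measure M (space M - A))"
    using pos pos2 by (auto intro!: prob_space_uniform_measure simp: emeasure_eq_measure)
  note u1 = unif_integral[OF fin A pos] and u2 = unif_integral[OF fin Ac pos2]
  have split: "(\<integral>x. (Z x - m)\<^sup>2 \<partial>M) = (\<integral>x. (Z x - m)\<^sup>2 * indicator A x \<partial>M)
      + (\<integral>x. (Z x - m)\<^sup>2 * indicator (space M - A) x \<partial>M)"
  proof -
    have "(\<integral>x. (Z x - m)\<^sup>2 \<partial>M) = (\<integral>x. (Z x - m)\<^sup>2 * indicator A x + (Z x - m)\<^sup>2 * indicator (space M - A) x \<partial>M)"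
      by (intro Bochner_Integration.integral_cong) (auto split: split_indicator)
    also have "\<dots> = (\<integral>x. (Z x - m)\<^sup>2 * indicator A x \<partial>M)
      + (\<integral>x. (Z x - m)\<^sup>2 * indicator (space M - A) x \<partial>M)"
      using integrable_real_mult_indicator[OF A sq] integrable_real_mult_indicator[OF Ac sq]
      by (rule Bochner_Integration.integral_add)
    finally show ?thesis .
  qed
  have e1: "(\<integral>x. (Z x - m)\<^sup>2 * indicator A x \<partial>M) = measure M A * (\<integral>x. (Z x - m)\<^sup>2 \<partial>uniform_measure M A)"
    using u1(2)[OF sq] pos by simp
  have e2: "(\<integral>x. (Z x - m)\<^sup>2 * indicator (space M - A) x \<partial>M) = measure M (space M - A) * (\<integral>x. (Z x - m)\<^sup>2 \<partial>uniform_measure M (space M - A))"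
    using u2(2)[OF sq] pos2 by simp
  have v1: "(\<integral>x. (Z x - m)\<^sup>2 \<partial>uniform_measure M A) \<ge> Var (uniform_measure M A) Z"
    using var_shift[OF ps(1) u1(1)[OF i1] u1(1)[OF i2], of m] by simp
  have v2: "(\<integral>x. (Z x - m)\<^sup>2 \<partial>uniform_measure M (space M - A)) \<ge> Var (uniform_measure M (space M - A)) Z"
    using var_shift[OF ps(2) u2(1)[OF i1] u2(1)[OF i2], of m] by simp
  have "Var M Z = (\<integral>x. (Z x - m)\<^sup>2 \<partial>M)" unfolding Var_def m_def ..
  also have "\<dots> \<ge> measure M A * Var (uniform_measure M A) Z
          + measure M (space M - A) * Var (uniform_measure M (space M - A)) Z"
    unfolding split e1 e2 using v1 v2 pos pos2
    by (intro add_mono mult_left_mono) auto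
  finally show ?thesis .
qed



lemma pointwise:
  fixes pV :: "'v measure" and f :: "'u \<Rightarrow> 'v \<Rightarrow> real" and k :: nat and Bu :: "real set" and u :: 'u and v1 :: 'v
  defines "M \<equiv> PiM {2..k} (\<lambda>_. pV)"
  defines "Sx \<equiv> {v \<in> space pV. exp (f u v) \<in> Bu}"
  defines "cu \<equiv> \<integral>v. exp (f u v) \<partial>pV"
  assumes pV: "prob_space pV" and g: "f u \<in> borel_measurable pV"
    and gi: "integrable pV (\<lambda>v. exp (f u v))"
    and Bsub: "Bu \<subseteq> {cu<..}" and Sm: "Sx \<in> sets pV" and Spos: "emeasure pV Sx > 0"
    and k: "2 \<le> k"
    and cpos: "emeasure M (space M - PiE {2..k} (\<lambda>_. Sx)) > 0"
  shows "Ex (uniform_measure M (PiE {2..k} (\<lambda>_. Sx))) (Zfun f k u v1) \<le> Ex M (Zfun f k u v1)"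
    "Var (uniform_measure M (PiE {2..k} (\<lambda>_. Sx))) (Zfun f k u v1)
       \<le> Var (uniform_measure M (space M - PiE {2..k} (\<lambda>_. Sx))) (Zfun f k u v1)
     \<Longrightarrow> Var (uniform_measure M (PiE {2..k} (\<lambda>_. Sx))) (Zfun f k u v1) \<le> Var M (Zfun f k u v1)"
proof -
  define A where "A = PiE {2..k} (\<lambda>_. Sx)"
  define a where "a = f u v1"
  define X where "X = (\<lambda>w. \<Sum>j\<in>{2..k}. exp (f u (w j)))"
  define L where "L = (\<lambda>w. ln (exp a + X w))"
  define C where "C = ln (real k) + a"
  define Z where "Z = Zfun f k u v1"
  have Mp: "prob_space M" unfolding M_def by (rule prob_space_PiM) (use pV in auto)
  interpret prob_space M by (fact Mp)
  have Xnn: "\<And>w. X w \<ge> 0" unfolding X_def by (auto intro: sum_nonneg)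
  have ypos: "\<And>w. exp a + X w > 0" using Xnn by (smt (verit) exp_gt_zero)
  have Zeq: "\<And>w. Z w = C - L w"
  proof -
    fix w
    have kp: "real k > 0" using k by auto
    have "Z w = ln (exp a / ((1 / real k) * (exp a + X w)))"
      unfolding Z_def Zfun_def a_def X_def ..
    also have "\<dots> = a - (ln (1 / real k) + ln (exp a + X w))"
      using kp ypos[of w] by (simp add: ln_div ln_mult)
    also have "\<dots> = C - L w" unfolding C_def L_def using kp by (simp add: ln_div)
    finally show "Z w = C - L w" .
  qed
  have comp: "\<And>j. j \<in> {2..k} \<Longrightarrow> (\<lambda>w. w j) \<in> measurable M pV"
    unfolding M_def by (rule measurable_component_singleton)
  have compd: "\<And>j. j \<in> {2..k} \<Longrightarrow> distr M pV (\<lambda>w. w j) = pV"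
    unfolding M_def by (rule distr_PiM_component) (use pV in auto)
  have gexp: "(\<lambda>v. exp (f u v)) \<in> borel_measurable pV" using g by measurable
  have Xj_int: "\<And>j. j \<in> {2..k} \<Longrightarrow> integrable M (\<lambda>w. exp (f u (w j)))"
    using gi compd integrable_distr_eq[OF comp gexp] by metis
  have Xj_intg: "\<And>j. j \<in> {2..k} \<Longrightarrow> (\<integral>w. exp (f u (w j)) \<partial>M) = cu"
    unfolding cu_def using compd integral_distr[OF comp gexp] by metis
  have Xint: "integrable M X" unfolding X_def using Xj_int by auto
  have Xintg: "(\<integral>w. X w \<partial>M) = real (k - 1) * cu"
    unfolding X_def using Xj_int Xj_intg by (simp add: Bochner_Integration.integral_sum)
  have Xm: "X \<in> borel_measurable M" using Xint by auto
  have Lm: "L \<in> borel_measurable M" unfolding L_def using Xm by measurable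
  have Lge: "\<And>w. L w \<ge> a" unfolding L_def using Xnn
    by (metis exp_gt_zero exp_le_cancel_iff exp_ln le_add_same_cancel1 ypos)
  have Lle: "\<And>w. L w \<le> exp a + X w - 1" unfolding L_def using ypos ln_le_minus_one by blast
  have Lint: "integrable M L"
  proof (rule Bochner_Integration.integrable_bound[OF _ Lm])
    show "integrable M (\<lambda>w. \<bar>a\<bar> + exp a + X w)" using Xint by auto
    show "AE w in M. norm (L w) \<le> norm (\<bar>a\<bar> + exp a + X w)"
      using Lge Lle Xnn by (auto intro!: AE_I2) (smt (verit) exp_gt_zero)
  qed
  have L2: "\<And>w. (L w)\<^sup>2 \<le> a\<^sup>2 + 2 * (exp a + X w)"
  proof -
    fix w
    show "(L w)\<^sup>2 \<le> a\<^sup>2 + 2 * (exp a + X w)"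
    proof (cases "L w \<ge> 0")
      case True
      have "1 + L w + (L w)\<^sup>2 / 2 \<le> exp (L w)" using exp_lower_Taylor_quadratic[OF True] .
      moreover have "exp (L w) = exp a + X w" unfolding L_def using ypos by simp
      ultimately have h: "(L w)\<^sup>2 / 2 \<le> exp a + X w" using True by linarith
      have h2: "(L w)\<^sup>2 \<le> 2 * (exp a + X w)" using h by (simp add: field_simps)
      show ?thesis by (rule add_increasing[OF zero_le_power2 h2])
    next
      case False
      then have "\<bar>L w\<bar> \<le> \<bar>a\<bar>" using Lge[of w] by auto
      then have "(L w)\<^sup>2 \<le> a\<^sup>2" by (metis abs_le_square_iff)
      then show ?thesis using Xnn[of w] by (smt (verit) exp_gt_zero)
    qed
  qed
  have L2int: "integrable M (\<lambda>w. (L w)\<^sup>2)"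
  proof (rule Bochner_Integration.integrable_bound[where f="\<lambda>w. a\<^sup>2 + 2 * (exp a + X w)"])
    show "integrable M (\<lambda>w. a\<^sup>2 + 2 * (exp a + X w))" using Xint by auto
    show "(\<lambda>w. (L w)\<^sup>2) \<in> borel_measurable M" using Lm by measurable
    show "AE w in M. norm ((L w)\<^sup>2) \<le> norm (a\<^sup>2 + 2 * (exp a + X w))"
      using L2 Xnn by (auto intro!: AE_I2)
  qed
  have Zf: "Z = (\<lambda>w. C - L w)" using Zeq by auto
  have Zint: "integrable M Z" unfolding Zf using Lint by auto
  have Z2f: "(\<lambda>w. (Z w)\<^sup>2) = (\<lambda>w. C\<^sup>2 - 2 * C * L w + (L w)\<^sup>2)"
    unfolding Zf by (auto simp: power2_eq_square algebra_simps)
  have Z2int: "integrable M (\<lambda>w. (Z w)\<^sup>2)" unfolding Z2f using Lint L2int by auto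
  have Am: "A \<in> sets M" unfolding A_def M_def using Sm by (auto intro!: sets_PiM_I_finite)
  have eA: "emeasure M A = (\<Prod>j\<in>{2..k}. emeasure pV Sx)"
  proof -
    interpret ps: product_sigma_finite "\<lambda>_. pV"
      unfolding product_sigma_finite_def using pV prob_space_imp_sigma_finite by blast
    show ?thesis unfolding A_def M_def by (rule ps.emeasure_PiM) (use Sm in auto)
  qed
  have Apos: "measure M A > 0"
  proof -
    have "emeasure M A > 0" unfolding eA using Spos
      by (simp add: zero_less_iff_neq_zero power_not_zero)
    then show ?thesis by (simp add: emeasure_eq_measure)
  qed
  have Acpos: "measure M (space M - A) > 0"
    using cpos unfolding A_def by (simp add: emeasure_eq_measure)
  note fin = finite_measure_axioms
  note u1 = unif_integral[OF fin Am Apos]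
  have qp: "prob_space (uniform_measure M A)"
    using Apos by (auto intro!: prob_space_uniform_measure simp: emeasure_eq_measure)
  define m where "m = exp a + real (k - 1) * cu"
  have cu0: "cu \<ge> 0" unfolding cu_def by (auto intro: integral_nonneg_AE)
  have mpos: "m > 0" unfolding m_def using cu0 by (smt (verit) exp_gt_zero mult_nonneg_nonneg of_nat_0_le_iff)
  have low: "\<And>w. C - ln m - (exp a + X w) / m + 1 \<le> Z w"
  proof -
    fix w
    have "ln ((exp a + X w) / m) \<le> (exp a + X w) / m - 1"
      using ypos[of w] mpos by (intro ln_le_minus_one) auto
    then have "L w \<le> ln m + (exp a + X w) / m - 1"
      unfolding L_def using ypos[of w] mpos by (simp add: ln_div)
    then show "C - ln m - (exp a + X w) / m + 1 \<le> Z w" using Zeq[of w] by simp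
  qed
  have lowint: "integrable M (\<lambda>w. C - ln m - (exp a + X w) / m + 1)" using Xint by auto
  have "(\<integral>w. C - ln m - (exp a + X w) / m + 1 \<partial>M) = C - ln m - (exp a + real (k - 1) * cu) / m + 1"
    using Xint Xintg by (simp add: Bochner_Integration.integral_add Bochner_Integration.integral_diff prob_space)
  also have "\<dots> = C - ln m" unfolding m_def using mpos m_def by simp
  finally have EM: "C - ln m \<le> Ex M Z"
    unfolding Ex_def using integral_mono[OF lowint Zint] low by (metis)
  have up: "AE w in uniform_measure M A. Z w \<le> C - ln m"
  proof (rule AE_uniform_measureI[OF Am], rule AE_I2, rule impI)
    fix w assume wA: "w \<in> A"
    have "\<And>j. j \<in> {2..k} \<Longrightarrow> exp (f u (w j)) \<ge> cu"
      using wA Bsub unfolding A_def Sx_def by (force simp: PiE_iff)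
    then have "X w \<ge> (\<Sum>j\<in>{2..k}. cu)" unfolding X_def by (intro sum_mono) auto
    then have "X w \<ge> real (k - 1) * cu" using k by simp
    then have "exp a + X w \<ge> m" unfolding m_def by simp
    then have "L w \<ge> ln m" unfolding L_def using mpos by simp
    then show "Z w \<le> C - ln m" using Zeq[of w] by simp
  qed
  have "Ex (uniform_measure M A) Z \<le> (\<integral>w. C - ln m \<partial>uniform_measure M A)"
    unfolding Ex_def using up u1(1)[OF Zint] prob_space.finite_measure[OF qp]
    by (intro integral_mono_AE) (auto simp: finite_measure.integrable_const)
  also have "\<dots> = C - ln m" using prob_space.prob_space[OF qp] by simp
  finally show "Ex (uniform_measure M (PiE {2..k} (\<lambda>_. Sx))) (Zfun f k u v1) \<le> Ex M (Zfun f k u v1)"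
    using EM unfolding A_def Z_def by simp
  assume vh: "Var (uniform_measure M (PiE {2..k} (\<lambda>_. Sx))) (Zfun f k u v1)
       \<le> Var (uniform_measure M (space M - PiE {2..k} (\<lambda>_. Sx))) (Zfun f k u v1)"
  have vm: "Var M Z \<ge> measure M A * Var (uniform_measure M A) Z
          + measure M (space M - A) * Var (uniform_measure M (space M - A)) Z"
    by (rule var_mix[OF Mp Am Apos Acpos Zint Z2int])
  have sum1: "measure M A + measure M (space M - A) = 1" using prob_compl[OF Am] by simp
  have "measure M (space M - A) * Var (uniform_measure M A) Z \<le> measure M (space M - A) * Var (uniform_measure M (space M - A)) Z"
    using vh Acpos unfolding A_def Z_def by (intro mult_left_mono) auto
  moreover have "measure M A * Var (uniform_measure M A) Z + measure M (space M - A) * Var (uniform_measure M A) Z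
      = Var (uniform_measure M A) Z"
    using sum1 by (metis distrib_right mult_1)
  ultimately have "Var (uniform_measure M A) Z \<le> Var M Z"
    using vm by linarith
  then show "Var (uniform_measure M (PiE {2..k} (\<lambda>_. Sx))) (Zfun f k u v1) \<le> Var M (Zfun f k u v1)"
    unfolding A_def Z_def .
qed



theorem theorem2:
  fixes P :: "('u \<times> 'v) measure" and MU :: "'u measure" and MV :: "'v measure"
    and f :: "'u \<Rightarrow> 'v \<Rightarrow> real" and k :: nat and B :: "'u \<Rightarrow> real set"
  defines "pV \<equiv> distr P MV snd"
    and "c \<equiv> (\<lambda>u. \<integral>v. exp (f u v) \<partial>distr P MV snd)"
    and "S \<equiv> (\<lambda>u. {v \<in> space MV. exp (f u v) \<in> B u})"
    and "pk \<equiv> (\<lambda>u::'u. PiM {2..k} (\<lambda>_. (distr P MV snd)))"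
    and "q \<equiv> (\<lambda>u. uniform_measure (PiM {2..k} (\<lambda>_. (distr P MV snd))) (PiE {2..k} (\<lambda>_. {v \<in> space MV. exp (f u v) \<in> B u})))"
    and "qt \<equiv> (\<lambda>u. uniform_measure (PiM {2..k} (\<lambda>_. (distr P MV snd)))
                      (space (PiM {2..k} (\<lambda>_. (distr P MV snd))) - PiE {2..k} (\<lambda>_. {v \<in> space MV. exp (f u v) \<in> B u})))"
  assumes P: "prob_space P" and sets_P: "sets P = sets (MU \<Otimes>\<^sub>M MV)"
    and f_meas: "case_prod f \<in> borel_measurable (MU \<Otimes>\<^sub>M MV)"
    and c_fin: "\<And>u. u \<in> space MU \<Longrightarrow> integrable pV (\<lambda>v. exp (f u v))"
    and B_borel: "\<And>u. u \<in> space MU \<Longrightarrow> B u \<in> sets borel"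
    and B_sub: "\<And>u. u \<in> space MU \<Longrightarrow> B u \<subseteq> {c u<..}"
    and S_meas: "{uv \<in> space (MU \<Otimes>\<^sub>M MV). exp (f (fst uv) (snd uv)) \<in> B (fst uv)}
                   \<in> sets (MU \<Otimes>\<^sub>M MV)"
    and S_pos: "\<And>u. u \<in> space MU \<Longrightarrow> emeasure pV (S u) > 0"
    and compl_pos: "\<And>u. u \<in> space MU \<Longrightarrow>
           emeasure (PiM {2..k} (\<lambda>_. pV)) (space (PiM {2..k} (\<lambda>_. pV)) - PiE {2..k} (\<lambda>_. S u)) > 0"
    and bias_p_int: "integrable P (\<lambda>uv. Ex (pk (fst uv)) (Zfun f k (fst uv) (snd uv)))"
    and bias_q_int: "integrable P (\<lambda>uv. Ex (q (fst uv)) (Zfun f k (fst uv) (snd uv)))"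
    and var_hyp: "\<And>u v1. (u, v1) \<in> space P \<Longrightarrow>
           Var (q u) (Zfun f k u v1) \<le> Var (qt u) (Zfun f k u v1)"
  shows "Bias P MU MV pk f k \<le> Bias P MU MV q f k
         \<and> (\<forall>u v1. (u, v1) \<in> space P \<longrightarrow> Var (pk u) (Zfun f k u v1) \<ge> Var (q u) (Zfun f k u v1))"
proof -
  have spP: "space P = space MU \<times> space MV"
    using sets_eq_imp_space_eq[OF sets_P] by (simp add: space_pair_measure)
  have sndm: "snd \<in> measurable P MV"
    using measurable_snd by (subst measurable_cong_sets[OF sets_P refl]) auto
  have pVp: "prob_space pV" unfolding pV_def
    by (rule prob_space.prob_space_distr[OF P sndm])
  have spV: "space pV = space MV" unfolding pV_def by simp
  have setspV: "sets pV = sets MV" unfolding pV_def by simp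
  have pt: "Ex (q u) (Zfun f k u v1) \<le> Ex (pk u) (Zfun f k u v1)
     \<and> (Var (q u) (Zfun f k u v1) \<le> Var (qt u) (Zfun f k u v1) \<longrightarrow> Var (q u) (Zfun f k u v1) \<le> Var (pk u) (Zfun f k u v1))"
    if uv: "(u, v1) \<in> space P" for u v1
  proof -
    have u: "u \<in> space MU" using uv spP by auto
    have gMV: "f u \<in> borel_measurable MV"
      using measurable_Pair2[OF f_meas u] by simp
    have g: "f u \<in> borel_measurable pV"
      using gMV by (subst measurable_cong_sets[OF setspV refl])
    have gexp: "(\<lambda>v. exp (f u v)) \<in> borel_measurable MV" using gMV by measurable
    have Sx_eq: "{v \<in> space pV. exp (f u v) \<in> B u} = S u" unfolding S_def spV ..
    have Sm: "{v \<in> space pV. exp (f u v) \<in> B u} \<in> sets pV"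
    proof -
      have "(\<lambda>v. exp (f u v)) -` B u \<inter> space MV \<in> sets MV"
        by (rule measurable_sets[OF gexp B_borel[OF u]])
      moreover have "(\<lambda>v. exp (f u v)) -` B u \<inter> space MV = {v \<in> space pV. exp (f u v) \<in> B u}"
        unfolding spV by auto
      ultimately show ?thesis using setspV by simp
    qed
    have cu: "c u = (\<integral>v. exp (f u v) \<partial>pV)" unfolding c_def pV_def ..
    have k: "2 \<le> k"
    proof (rule ccontr)
      assume "\<not> 2 \<le> k"
      then have e: "{2..k} = {}" by auto
      have "space (PiM {2..k} (\<lambda>_. pV)) - PiE {2..k} (\<lambda>_. S u) = {}"
        unfolding e by (simp add: space_PiM)
      then have "emeasure (PiM {2..k} (\<lambda>_. pV)) (space (PiM {2..k} (\<lambda>_. pV)) - PiE {2..k} (\<lambda>_. S u)) = 0"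
        by (metis emeasure_empty)
      then show False using compl_pos[OF u] by simp
    qed
    note r = pointwise[of pV f u "B u" k v1, OF pVp g c_fin[OF u] B_sub[OF u, unfolded cu] Sm
        S_pos[OF u, folded Sx_eq] k compl_pos[OF u, folded Sx_eq]]
    have qe: "q u = uniform_measure (PiM {2..k} (\<lambda>_. pV)) (PiE {2..k} (\<lambda>_. {v \<in> space pV. exp (f u v) \<in> B u}))"
      unfolding q_def pV_def by simp
    have qte: "qt u = uniform_measure (PiM {2..k} (\<lambda>_. pV)) (space (PiM {2..k} (\<lambda>_. pV)) - PiE {2..k} (\<lambda>_. {v \<in> space pV. exp (f u v) \<in> B u}))"
      unfolding qt_def pV_def by simp
    have pke: "pk u = PiM {2..k} (\<lambda>_. pV)" unfolding pk_def pV_def ..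
    show ?thesis unfolding qe qte pke using r by blast
  qed
  have "(\<integral>uv. Ex (q (fst uv)) (Zfun f k (fst uv) (snd uv)) \<partial>P) \<le> (\<integral>uv. Ex (pk (fst uv)) (Zfun f k (fst uv) (snd uv)) \<partial>P)"
    using bias_q_int bias_p_int by (rule integral_mono) (use pt in auto)
  then have "Bias P MU MV pk f k \<le> Bias P MU MV q f k" unfolding Bias_def by simp
  moreover have "\<forall>u v1. (u, v1) \<in> space P \<longrightarrow> Var (pk u) (Zfun f k u v1) \<ge> Var (q u) (Zfun f k u v1)"
    using pt var_hyp by blast
  ultimately show ?thesis by blast
qed

end
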